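(* Let $m>3$ be an odd integer, let $G=\mathbb{Z}_{2m}$ and $H=\{0,m\}\le G$. For $1\le i\le\frac{m-1}{2}$ let $S_i=\{i,m-i,m+i,2m-i\}\subseteq\mathbb{Z}_{2m}$. Then the family $\{S_i:1\le i\le \frac{m-1}{2}\}$ partitions $G\setminus H$ and is a $(2m,\frac{m-1}{2},4,2,2m-2)$-DPDF and a $(2m,\frac{m-1}{2},4,2m-6,0)$-EPDF in $G$.
   Context: In an additive group $G$ with identity $0$, let $G^*=G\setminus\{0\}$. For $D\subseteq G$, $\Delta(D)$ is the multiset $\{x-y:x,y\in D,x\ne y\}$; for $D_1,D_2\subseteq G$, $\Delta(D_1,D_2)$ is the multiset $\{x-y:x\in D_1,y\in D_2\}$. For a family $A=\{A_1,\dots,A_s\}$ of pairwise disjoint subsets, ${\rm Int}(A)=\bigcup_i\Delta(A_i)$ and ${\rm Ext}(A)=\bigcup_{i\ne j}\Delta(A_i,A_j)$ (multiset unions). For $|G|=v$, a $(v,s,k,\lambda,\mu)$-DPDF is a family of $s$ pairwise disjoint $k$-subsets of $G^*$ with union $S$ such that ${\rm Int}(A)$ contains each element of $S$ exactly $\lambda$ times and each element of $G\setminus(S\cup\{0\})$ exactly $\mu$ times; a $(v,s,k,\lambda,\mu)$-EPDF is defined the same way using ${\rm Ext}(A)$. A family partitions a set $X$ if its members are pairwise disjoint with union $X$. *)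

theory Defs
  imports Main
begin

text \<open>The cyclic group Z_n is represented by the integers 0..n-1, with the group
difference x - y taken modulo n; its identity is 0 and G* = {1..<n}.\<close>

text \<open>Multiplicity of g in Int(A) = multiset union of Delta(A_i).\<close>
definition int_mult :: "int \<Rightarrow> int set set \<Rightarrow> int \<Rightarrow> nat" where
  "int_mult n A g =
     (\<Sum>D\<in>A. card {(x, y). x \<in> D \<and> y \<in> D \<and> x \<noteq> y \<and> (x - y) mod n = g})"

text \<open>Multiplicity of g in Ext(A) = multiset union of Delta(A_i, A_j), i \<noteq> j.\<close>
definition ext_mult :: "int \<Rightarrow> int set set \<Rightarrow> int \<Rightarrow> nat" where
  "ext_mult n A g =
     (\<Sum>D1\<in>A. \<Sum>D2\<in>A - {D1}. card {(x, y). x \<in> D1 \<and> y \<in> D2 \<and> (x - y) mod n = g})"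

definition pdf_family :: "int \<Rightarrow> nat \<Rightarrow> nat \<Rightarrow> int set set \<Rightarrow> bool" where
  "pdf_family n s k A \<longleftrightarrow> finite A \<and> card A = s \<and> pairwise disjnt A \<and>
     (\<forall>D\<in>A. D \<subseteq> {1..<n} \<and> card D = k)"

definition is_DPDF :: "int \<Rightarrow> nat \<Rightarrow> nat \<Rightarrow> nat \<Rightarrow> nat \<Rightarrow> int set set \<Rightarrow> bool" where
  "is_DPDF n s k lam mu A \<longleftrightarrow> pdf_family n s k A \<and>
     (\<forall>g\<in>\<Union>A. int_mult n A g = lam) \<and>
     (\<forall>g\<in>{0..<n} - (\<Union>A \<union> {0}). int_mult n A g = mu)"

definition is_EPDF :: "int \<Rightarrow> nat \<Rightarrow> nat \<Rightarrow> nat \<Rightarrow> nat \<Rightarrow> int set set \<Rightarrow> bool" where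
  "is_EPDF n s k lam mu A \<longleftrightarrow> pdf_family n s k A \<and>
     (\<forall>g\<in>\<Union>A. ext_mult n A g = lam) \<and>
     (\<forall>g\<in>{0..<n} - (\<Union>A \<union> {0}). ext_mult n A g = mu)"

definition partitions :: "'a set \<Rightarrow> 'a set set \<Rightarrow> bool" where
  "partitions X A \<longleftrightarrow> pairwise disjnt A \<and> \<Union>A = X"

end

theory Submission
  imports Defs
begin

definition rr :: "int \<Rightarrow> int \<Rightarrow> int" where
  "rr m x = min (x mod m) (m - x mod m)"

lemma div01:
  fixes m x :: int assumes "m > 0" "0 \<le> x" "x < 2*m"
  shows "x = x mod m \<or> x = x mod m + m"
proof -
  have "x div m \<ge> 0" using assms by (simp add: pos_imp_zdiv_nonneg_iff)
  moreover have "x div m < 2"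
  proof (rule ccontr)
    assume "\<not> x div m < 2"
    then have "m * 2 \<le> m * (x div m)" using assms by (intro mult_left_mono) auto
    moreover have "x = m * (x div m) + x mod m" by simp
    moreover have "x mod m \<ge> 0" using assms by simp
    ultimately show False using assms by linarith
  qed
  ultimately have "x div m = 0 \<or> x div m = 1" by auto
  moreover have "x = m * (x div m) + x mod m" by simp
  ultimately show ?thesis by (metis add.commute add_0 mult.right_neutral mult_zero_right)
qed

lemma blk:
  fixes m i x :: int
  assumes m: "m > 3" "odd m" and i: "1 \<le> i" "i \<le> (m-1) div 2"
  shows "x \<in> {i, m-i, m+i, 2*m-i} \<longleftrightarrow> (0 \<le> x \<and> x < 2*m \<and> x mod m \<noteq> 0 \<and> rr m x = i)"
proof -
  have i2: "2*i < m" using i m by linarith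
  show ?thesis
  proof
    assume "x \<in> {i, m-i, m+i, 2*m-i}"
    moreover have "i mod m = i" using i2 i by simp
    moreover have "(m-i) mod m = m-i" using i2 i by (intro mod_pos_pos_trivial) auto
    moreover have "(m+i) mod m = i" using i2 i by simp
    moreover have "(2*m-i) mod m = m-i"
    proof -
      have "2*m-i = (m-i) + m*1" by simp
      then show ?thesis using i2 i \<open>(m-i) mod m = m-i\<close> by (metis mod_mult_self2)
    qed
    ultimately show "0 \<le> x \<and> x < 2*m \<and> x mod m \<noteq> 0 \<and> rr m x = i"
      using i2 i unfolding rr_def by (elim insertE emptyE) (simp_all add: min_def)
  next
    assume h: "0 \<le> x \<and> x < 2*m \<and> x mod m \<noteq> 0 \<and> rr m x = i"
    then have "x = x mod m \<or> x = x mod m + m" using div01[of m x] m by auto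
    moreover have "x mod m = i \<or> x mod m = m - i" using h unfolding rr_def by linarith
    ultimately show "x \<in> {i, m-i, m+i, 2*m-i}" by auto
  qed
qed

lemma memX:
  fixes m x :: int assumes "m > 0"
  shows "x \<in> {0..<2*m} - {0,m} \<longleftrightarrow> (0 \<le> x \<and> x < 2*m \<and> x mod m \<noteq> 0)"
proof
  assume "x \<in> {0..<2*m} - {0,m}"
  then show "0 \<le> x \<and> x < 2*m \<and> x mod m \<noteq> 0" using div01[of m x] assms by auto
next
  assume h: "0 \<le> x \<and> x < 2*m \<and> x mod m \<noteq> 0"
  then have "x \<noteq> 0" by auto
  moreover have "x \<noteq> m" using h by auto
  ultimately show "x \<in> {0..<2*m} - {0,m}" using h by auto
qed

lemma mm: fixes m z :: int shows "(z mod (2*m)) mod m = z mod m"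
  by (simp add: mod_mod_cancel)

lemma rr_mod: fixes m z :: int shows "rr m (z mod (2*m)) = rr m z"
  unfolding rr_def mm by simp

lemma memX2:
  fixes m z :: int assumes "m > 0"
  shows "z mod (2*m) \<in> {0..<2*m} - {0,m} \<longleftrightarrow> z mod m \<noteq> 0"
  using memX[of m "z mod (2*m)"] assms mm[of z m] by simp

lemma rr_range:
  fixes m x :: int assumes "m > 3" "odd m" "x mod m \<noteq> 0"
  shows "1 \<le> rr m x \<and> rr m x \<le> (m-1) div 2"
proof -
  obtain k where k: "m = 2*k+1" using assms(2) by (metis oddE)
  have "0 \<le> x mod m" "x mod m < m" using assms by auto
  then show ?thesis using assms(3) k unfolding rr_def by auto
qed

lemma cls:
  fixes m c :: int assumes "m > 0" "0 \<le> c" "c < m"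
  shows "{x. 0 \<le> x \<and> x < 2*m \<and> x mod m = c} = {c, c+m}"
proof -
  have "(c+m) mod m = c" using assms by simp
  moreover have "c mod m = c" using assms by simp
  ultimately show ?thesis using div01[of m] assms by auto
qed

lemma card_cls:
  fixes m c :: int assumes "m > 0" "0 \<le> c" "c < m"
  shows "card {x. 0 \<le> x \<and> x < 2*m \<and> x mod m = c} = 2"
  using cls[OF assms] assms by simp

lemma key_y: fixes m x y :: int assumes "0 \<le> y" "y < 2*m"
  shows "(x - (x - y) mod (2*m)) mod (2*m) = y"
proof -
  have "(x - (x - y) mod (2*m)) mod (2*m) = (x - (x - y)) mod (2*m)"
    by (rule mod_diff_right_eq)
  also have "\<dots> = y" using assms by simp
  finally show ?thesis .
qed

lemma key_g: fixes m x g :: int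
  shows "(x - (x - g) mod (2*m)) mod (2*m) = g mod (2*m)"
proof -
  have "(x - (x - g) mod (2*m)) mod (2*m) = (x - (x - g)) mod (2*m)"
    by (rule mod_diff_right_eq)
  then show ?thesis by simp
qed

lemma pair_x:
  fixes m g :: int and X :: "int set" and R :: "int \<Rightarrow> int \<Rightarrow> bool"
  assumes "X \<subseteq> {0..<2*m}"
  shows "card {(x, y). x \<in> X \<and> y \<in> X \<and> R x y \<and> (x - y) mod (2*m) = g}
       = card {x \<in> X. (x - g) mod (2*m) \<in> X \<and> R x ((x - g) mod (2*m)) \<and> g mod (2*m) = g}"
proof -
  let ?P = "{(x, y). x \<in> X \<and> y \<in> X \<and> R x y \<and> (x - y) mod (2*m) = g}"
  let ?Q = "{x \<in> X. (x - g) mod (2*m) \<in> X \<and> R x ((x - g) mod (2*m)) \<and> g mod (2*m) = g}"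
  let ?f = "\<lambda>x. (x, (x - g) mod (2*m))"
  have "?P \<subseteq> ?f ` ?Q"
  proof
    fix p assume "p \<in> ?P"
    then obtain x y where p: "p = (x, y)" and h: "x \<in> X" "y \<in> X" "R x y" "(x - y) mod (2*m) = g"
      by blast
    have y: "0 \<le> y" "y < 2*m" using h assms by auto
    have e: "(x - g) mod (2*m) = y" using key_y[OF y, of x] h(4) by simp
    have "g mod (2*m) = g" using h(4) by auto
    then have "x \<in> ?Q" using e h by simp
    then show "p \<in> ?f ` ?Q" using p e by force
  qed
  moreover have "?f ` ?Q \<subseteq> ?P"
  proof
    fix p assume "p \<in> ?f ` ?Q"
    then obtain x where p: "p = ?f x" and x: "x \<in> ?Q" by blast
    have "(x - (x - g) mod (2*m)) mod (2*m) = g" using key_g[of x g m] x by simp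
    then show "p \<in> ?P" using p x by simp
  qed
  ultimately have "?P = ?f ` ?Q" by blast
  moreover have "inj_on ?f ?Q" by (rule inj_onI) simp
  ultimately show ?thesis by (simp add: card_image)
qed

lemma dvd_range: fixes m s :: int assumes "m > 0" "0 < s" "s < 2*m" "m dvd s" shows "s = m"
proof -
  obtain k where k: "s = m*k" using assms by (auto elim: dvdE)
  have "k > 0" using assms k by (auto simp add: zero_less_mult_iff)
  moreover have "m * k < m * 2" using assms k by (simp add: mult.commute)
  then have "k < 2" using assms by simp
  ultimately show ?thesis using k by (metis int_one_le_iff_zero_less less_le mult.right_neutral not_less one_add_one zless_imp_add1_zle)
qed

lemma core:
  fixes m g x :: int
  assumes m: "m > 3" "odd m" and g: "g mod m \<noteq> 0"
  shows "(x mod m \<noteq> 0 \<and> (x-g) mod m \<noteq> 0 \<and> rr m x = rr m (x-g))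
     \<longleftrightarrow> x mod m = (g * ((m+1) div 2)) mod m"
proof -
  define h where "h = (m+1) div 2"
  obtain k where k: "m = 2*k+1" using m(2) by (metis oddE)
  have "h = k + 1" unfolding h_def k by simp
  then have h2: "2*h = m + 1" using k by simp
  have cop: "coprime m 2" using m by simp
  have key: "m dvd 2*x - g \<longleftrightarrow> m dvd x - g*h"
  proof -
    have e: "2*x - g = 2*(x - g*h) + g*m" using h2 by (simp add: algebra_simps)
    have "m dvd 2*x - g \<longleftrightarrow> m dvd 2*(x - g*h)"
      unfolding e by (simp add: dvd_add_left_iff)
    also have "\<dots> \<longleftrightarrow> m dvd x - g*h"
      by (rule coprime_dvd_mult_right_iff[OF cop])
    finally show ?thesis .
  qed
  have gnd: "\<not> m dvd g" using g by (simp add: dvd_eq_mod_eq_0)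
  define a where "a = x mod m"
  define b where "b = (x-g) mod m"
  have ab: "0 \<le> a" "a < m" "0 \<le> b" "b < m" using m unfolding a_def b_def by auto
  have amod: "m dvd x - a" unfolding a_def by (simp add: mod_eq_dvd_iff[symmetric])
  have bmod: "m dvd (x - g) - b" unfolding b_def by (simp add: mod_eq_dvd_iff[symmetric])
  show ?thesis unfolding h_def[symmetric]
  proof
    assume H: "x mod m \<noteq> 0 \<and> (x-g) mod m \<noteq> 0 \<and> rr m x = rr m (x-g)"
    then have "a = b \<or> a + b = m" using ab unfolding rr_def a_def[symmetric] b_def[symmetric] by linarith
    moreover have "a \<noteq> b"
    proof
      assume "a = b"
      have "m dvd (x - a) - ((x-g) - b)" using amod bmod by (rule dvd_diff)
      also have "(x - a) - ((x-g) - b) = g" using \<open>a = b\<close> by simp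
      finally show False using gnd by simp
    qed
    ultimately have "a + b = m" by simp
    then have "m dvd a + b" by simp
    then have "m dvd ((x - a) + ((x-g) - b)) + (a + b)" by (rule dvd_add[OF dvd_add[OF amod bmod]])
    also have "((x - a) + ((x-g) - b)) + (a + b) = 2*x - g" by simp
    finally have "m dvd 2*x - g" .
    then have "m dvd x - g*h" using key by simp
    then show "x mod m = g*h mod m" by (simp add: mod_eq_dvd_iff)
  next
    assume "x mod m = g*h mod m"
    then have "m dvd x - g*h" by (simp add: mod_eq_dvd_iff)
    then have d: "m dvd 2*x - g" using key by simp
    have a0: "a \<noteq> 0"
    proof
      assume "a = 0"
      then have "m dvd x" using amod by simp
      then have "m dvd 2*x" by simp
      then have "m dvd 2*x - (2*x - g)" using d by (metis dvd_diff)
      also have "2*x - (2*x - g) = g" by simp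
      finally show False using gnd by simp
    qed
    have b0: "b \<noteq> 0"
    proof
      assume "b = 0"
      then have "m dvd x - g" using bmod by simp
      then have "m dvd (2*x - g) - (x - g)" using d by (metis dvd_diff)
      also have "(2*x - g) - (x - g) = x" by simp
      finally have "m dvd x" .
      then have "m dvd x - (x - a)" using amod by (metis dvd_diff)
      also have "x - (x - a) = a" by simp
      finally have "m dvd a" .
      then show False using a0 ab by (simp add: zdvd_not_zless)
    qed
    have "m dvd (2*x - g) - ((x - a) + ((x-g) - b))" by (rule dvd_diff[OF d dvd_add[OF amod bmod]])
    also have "(2*x - g) - ((x - a) + ((x-g) - b)) = a + b" by simp
    finally have "m dvd a + b" .
    then have "a + b = m" using dvd_range[of m "a+b"] ab a0 b0 m by simp
    then show "x mod m \<noteq> 0 \<and> (x-g) mod m \<noteq> 0 \<and> rr m x = rr m (x-g)"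
      using a0 b0 ab unfolding rr_def a_def[symmetric] b_def[symmetric] by linarith
  qed
qed

definition SS :: "int \<Rightarrow> int \<Rightarrow> int set" where
  "SS m i = {i, m - i, m + i, 2 * m - i}"

definition XX :: "int \<Rightarrow> int set" where
  "XX m = {0..<2*m} - {0,m}"

definition II :: "int \<Rightarrow> int set" where
  "II m = {1..(m - 1) div 2}"

lemma inS:
  fixes m i x :: int assumes m: "m > 3" "odd m" and i: "i \<in> II m"
  shows "x \<in> SS m i \<longleftrightarrow> x \<in> XX m \<and> rr m x = i"
  using blk[OF m, of i x] memX[of m x] i m unfolding SS_def XX_def II_def by auto

lemma coverX:
  fixes m x :: int assumes m: "m > 3" "odd m" and x: "x \<in> XX m"
  shows "rr m x \<in> II m" "x \<in> SS m (rr m x)"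
proof -
  show "rr m x \<in> II m" using rr_range[OF m, of x] memX[of m x] x m unfolding XX_def II_def by auto
  then show "x \<in> SS m (rr m x)" using inS[OF m] x by auto
qed

lemma injS:
  fixes m :: int assumes m: "m > 3" "odd m"
  shows "inj_on (SS m) (II m)"
proof (rule inj_onI)
  fix i j assume i: "i \<in> II m" and j: "j \<in> II m" and e: "SS m i = SS m j"
  have "i \<in> SS m i" unfolding SS_def by simp
  then have "rr m i = i" "i \<in> SS m j" using inS[OF m i] e by auto
  then show "i = j" using inS[OF m j] by auto
qed

lemma finII: "finite (II m)" unfolding II_def by simp
lemma finSS: "finite (SS m i)" unfolding SS_def by simp
lemma finXX: "finite (XX m)" unfolding XX_def by simp

lemma XXsub: "XX m \<subseteq> {0..<2*m}" unfolding XX_def by auto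

lemma int_count:
  fixes m g :: int assumes m: "m > 3" "odd m"
  shows "int_mult (2*m) (SS m ` II m) g =
    card {x \<in> XX m. (x - g) mod (2*m) \<in> XX m \<and> (rr m x = rr m ((x - g) mod (2*m)) \<and> x \<noteq> (x - g) mod (2*m)) \<and> g mod (2*m) = g}"
proof -
  define P where "P i = {(x, y). x \<in> SS m i \<and> y \<in> SS m i \<and> x \<noteq> y \<and> (x - y) mod (2*m) = g}" for i
  have "int_mult (2*m) (SS m ` II m) g = (\<Sum>i\<in>II m. card (P i))"
    unfolding int_mult_def P_def by (simp add: sum.reindex[OF injS[OF m]])
  also have "\<dots> = card (\<Union>i\<in>II m. P i)"
  proof (rule card_UN_disjoint[symmetric])
    show "finite (II m)" by (rule finII)
    show "\<forall>i\<in>II m. finite (P i)"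
    proof
      fix i have "P i \<subseteq> SS m i \<times> SS m i" unfolding P_def by auto
      then show "finite (P i)" using finSS by (meson finite_SigmaI finite_subset)
    qed
    show "\<forall>i\<in>II m. \<forall>j\<in>II m. i \<noteq> j \<longrightarrow> P i \<inter> P j = {}"
    proof (intro ballI impI)
      fix i j assume i: "i \<in> II m" and j: "j \<in> II m" and ij: "i \<noteq> j"
      show "P i \<inter> P j = {}"
      proof (rule ccontr)
        assume "P i \<inter> P j \<noteq> {}"
        then obtain x y where "(x, y) \<in> P i" "(x, y) \<in> P j" by auto
        then have "x \<in> SS m i" "x \<in> SS m j" unfolding P_def by auto
        then show False using inS[OF m i, of x] inS[OF m j, of x] ij by simp
      qed
    qed
  qed
  also have "(\<Union>i\<in>II m. P i) = {(x, y). x \<in> XX m \<and> y \<in> XX m \<and> (rr m x = rr m y \<and> x \<noteq> y) \<and> (x - y) mod (2*m) = g}"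
  proof safe
    fix x y i assume i: "i \<in> II m" and p: "(x, y) \<in> P i"
    then have h: "x \<in> SS m i" "y \<in> SS m i" "x \<noteq> y" "(x - y) mod (2*m) = g" unfolding P_def by auto
    show "x \<in> XX m" "y \<in> XX m" "rr m x = rr m y" "(x - y) mod (2*m) = g"
      using h inS[OF m i, of x] inS[OF m i, of y] by auto
  next
    fix x y assume h: "x \<in> XX m" "y \<in> XX m" "rr m x = rr m y" "x \<noteq> y" "g = (x - y) mod (2*m)"
    have "(x, y) \<in> P (rr m x)" unfolding P_def using h coverX[OF m h(1)] coverX[OF m h(2)] by simp
    then show "(x, y) \<in> (\<Union>i\<in>II m. P i)" using coverX[OF m h(1)] by blast
  next
    fix b i assume "i \<in> II m" "(b, b) \<in> P i"
    then show False unfolding P_def by simp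
  qed
  also have "card \<dots> = card {x \<in> XX m. (x - g) mod (2*m) \<in> XX m \<and> (rr m x = rr m ((x - g) mod (2*m)) \<and> x \<noteq> (x - g) mod (2*m)) \<and> g mod (2*m) = g}"
    by (rule pair_x[OF XXsub])
  finally show ?thesis .
qed

lemma ext_count:
  fixes m g :: int assumes m: "m > 3" "odd m"
  shows "ext_mult (2*m) (SS m ` II m) g =
    card {x \<in> XX m. (x - g) mod (2*m) \<in> XX m \<and> rr m x \<noteq> rr m ((x - g) mod (2*m)) \<and> g mod (2*m) = g}"
proof -
  define Q where "Q p = {(x, y). x \<in> SS m (fst p) \<and> y \<in> SS m (snd p) \<and> (x - y) mod (2*m) = g}" for p
  have inj: "inj_on (SS m) (II m)" by (rule injS[OF m])
  have "ext_mult (2*m) (SS m ` II m) g = (\<Sum>i\<in>II m. \<Sum>D2\<in>SS m ` II m - {SS m i}.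
      card {(x, y). x \<in> SS m i \<and> y \<in> D2 \<and> (x - y) mod (2*m) = g})"
    unfolding ext_mult_def by (simp add: sum.reindex[OF inj])
  also have "\<dots> = (\<Sum>i\<in>II m. \<Sum>j\<in>II m - {i}. card (Q (i, j)))"
  proof (rule sum.cong[OF refl])
    fix i assume i: "i \<in> II m"
    have e: "SS m ` II m - {SS m i} = SS m ` (II m - {i})"
      using inj i by (simp add: inj_on_image_set_diff)
    have inj2: "inj_on (SS m) (II m - {i})" using inj by (rule inj_on_subset) auto
    show "(\<Sum>D2\<in>SS m ` II m - {SS m i}. card {(x, y). x \<in> SS m i \<and> y \<in> D2 \<and> (x - y) mod (2*m) = g})
       = (\<Sum>j\<in>II m - {i}. card (Q (i, j)))"
      unfolding e Q_def by (simp add: sum.reindex[OF inj2])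
  qed
  also have "\<dots> = (\<Sum>p\<in>(SIGMA i:II m. II m - {i}). card (Q p))"
    by (subst sum.Sigma) (auto simp: finII)
  also have "\<dots> = card (\<Union>p\<in>(SIGMA i:II m. II m - {i}). Q p)"
  proof (rule card_UN_disjoint[symmetric])
    show "finite (SIGMA i:II m. II m - {i})" by (auto simp: finII)
    show "\<forall>p\<in>(SIGMA i:II m. II m - {i}). finite (Q p)"
    proof
      fix p have "Q p \<subseteq> SS m (fst p) \<times> SS m (snd p)" unfolding Q_def by auto
      then show "finite (Q p)" using finSS by (meson finite_SigmaI finite_subset)
    qed
    show "\<forall>p\<in>(SIGMA i:II m. II m - {i}). \<forall>q\<in>(SIGMA i:II m. II m - {i}). p \<noteq> q \<longrightarrow> Q p \<inter> Q q = {}"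
    proof (intro ballI impI)
      fix p q assume p: "p \<in> (SIGMA i:II m. II m - {i})" and q: "q \<in> (SIGMA i:II m. II m - {i})" and pq: "p \<noteq> q"
      show "Q p \<inter> Q q = {}"
      proof (rule ccontr)
        assume "Q p \<inter> Q q \<noteq> {}"
        then obtain x y where "(x, y) \<in> Q p" "(x, y) \<in> Q q" by auto
        then have h: "x \<in> SS m (fst p)" "x \<in> SS m (fst q)" "y \<in> SS m (snd p)" "y \<in> SS m (snd q)"
          unfolding Q_def by auto
        have "fst p \<in> II m" "fst q \<in> II m" "snd p \<in> II m" "snd q \<in> II m" using p q by auto
        then have "fst p = fst q" "snd p = snd q" using h inS[OF m] by metis+
        then show False using pq by (simp add: prod_eq_iff)
      qed
    qed
  qed
  also have "(\<Union>p\<in>(SIGMA i:II m. II m - {i}). Q p) = {(x, y). x \<in> XX m \<and> y \<in> XX m \<and> rr m x \<noteq> rr m y \<and> (x - y) mod (2*m) = g}"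
  proof
    show "(\<Union>p\<in>(SIGMA i:II m. II m - {i}). Q p) \<subseteq> {(x, y). x \<in> XX m \<and> y \<in> XX m \<and> rr m x \<noteq> rr m y \<and> (x - y) mod (2*m) = g}"
    proof (rule subsetI)
      fix p assume "p \<in> (\<Union>p\<in>(SIGMA i:II m. II m - {i}). Q p)"
      then obtain i j where ij: "(i, j) \<in> (SIGMA i:II m. II m - {i})" and pq: "p \<in> Q (i, j)" by auto
      obtain x y where p: "p = (x, y)" by (cases p)
      have h: "x \<in> SS m i" "y \<in> SS m j" "(x - y) mod (2*m) = g" using pq p unfolding Q_def by auto
      have "i \<in> II m" "j \<in> II m" "i \<noteq> j" using ij by auto
      then have "x \<in> XX m \<and> y \<in> XX m \<and> rr m x \<noteq> rr m y \<and> (x - y) mod (2*m) = g"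
        using h inS[OF m, of i x] inS[OF m, of j y] by auto
      then show "p \<in> {(x, y). x \<in> XX m \<and> y \<in> XX m \<and> rr m x \<noteq> rr m y \<and> (x - y) mod (2*m) = g}"
        using p by simp
    qed
    show "{(x, y). x \<in> XX m \<and> y \<in> XX m \<and> rr m x \<noteq> rr m y \<and> (x - y) mod (2*m) = g} \<subseteq> (\<Union>p\<in>(SIGMA i:II m. II m - {i}). Q p)"
    proof safe
      fix x y assume h: "x \<in> XX m" "y \<in> XX m" "rr m x \<noteq> rr m y" "g = (x - y) mod (2*m)"
      have "(rr m x, rr m y) \<in> (SIGMA i:II m. II m - {i})" using coverX[OF m] h by auto
      moreover have "(x, y) \<in> Q (rr m x, rr m y)" unfolding Q_def using coverX[OF m] h by auto
      ultimately show "(x, y) \<in> (\<Union>p\<in>(SIGMA i:II m. II m - {i}). Q p)" by blast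
    qed
  qed
  also have "card \<dots> = card {x \<in> XX m. (x - g) mod (2*m) \<in> XX m \<and> rr m x \<noteq> rr m ((x - g) mod (2*m)) \<and> g mod (2*m) = g}"
    by (rule pair_x[OF XXsub])
  finally show ?thesis .
qed

lemma XXmem: fixes m x :: int assumes "m > 0"
  shows "x \<in> XX m \<longleftrightarrow> (0 \<le> x \<and> x < 2*m \<and> x mod m \<noteq> 0)"
  unfolding XX_def by (rule memX[OF assms])

lemma XXmem2: fixes m z :: int assumes "m > 0"
  shows "z mod (2*m) \<in> XX m \<longleftrightarrow> z mod m \<noteq> 0"
  unfolding XX_def by (rule memX2[OF assms])

lemma neqg: fixes m x g :: int assumes "g mod (2*m) \<noteq> 0"
  shows "x \<noteq> (x - g) mod (2*m)"
proof
  assume e: "x = (x - g) mod (2*m)"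
  have "(x - (x - g) mod (2*m)) mod (2*m) = g mod (2*m)" by (rule key_g)
  then have "g mod (2*m) = 0" using e by simp
  then show False using assms by simp
qed

lemma cardXX: fixes m :: int assumes "m > 0" shows "card (XX m) = nat (2*m) - 2"
proof -
  have "card (XX m) = card {0..<2*m} - card {0, m}" unfolding XX_def
    using assms by (intro card_Diff_subset) auto
  moreover have "card {0, m} = 2" using assms by simp
  ultimately show ?thesis by simp
qed

lemma int_m:
  fixes m :: int assumes m: "m > 3" "odd m"
  shows "int_mult (2*m) (SS m ` II m) m = nat (2*m - 2)"
proof -
  have m0: "m > 0" using m by simp
  have "{x \<in> XX m. (x - m) mod (2*m) \<in> XX m \<and> (rr m x = rr m ((x - m) mod (2*m)) \<and> x \<noteq> (x - m) mod (2*m)) \<and> m mod (2*m) = m} = XX m"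
  proof (rule set_eqI)
    fix x
    have a: "(x - m) mod m = x mod m" by simp
    have b: "rr m ((x - m) mod (2*m)) = rr m x" unfolding rr_mod unfolding rr_def a by simp
    have c: "x \<noteq> (x - m) mod (2*m)" using m0 by (intro neqg) simp
    have d: "m mod (2*m) = m" using m0 by simp
    show "x \<in> {x \<in> XX m. (x - m) mod (2*m) \<in> XX m \<and> (rr m x = rr m ((x - m) mod (2*m)) \<and> x \<noteq> (x - m) mod (2*m)) \<and> m mod (2*m) = m} \<longleftrightarrow> x \<in> XX m"
      using XXmem2[OF m0, of "x - m"] XXmem[OF m0, of x] a b c d by auto
  qed
  then show ?thesis using int_count[OF m, of m] cardXX[OF m0] m0 by simp
qed

lemma int_g:
  fixes m g :: int assumes m: "m > 3" "odd m" and g: "g \<in> XX m"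
  shows "int_mult (2*m) (SS m ` II m) g = 2"
proof -
  have m0: "m > 0" using m by simp
  have gm: "g mod m \<noteq> 0" "g mod (2*m) = g" using g XXmem[OF m0] by auto
  define c where "c = (g * ((m+1) div 2)) mod m"
  have "{x \<in> XX m. (x - g) mod (2*m) \<in> XX m \<and> (rr m x = rr m ((x - g) mod (2*m)) \<and> x \<noteq> (x - g) mod (2*m)) \<and> g mod (2*m) = g}
     = {x. 0 \<le> x \<and> x < 2*m \<and> x mod m = c}"
  proof (rule set_eqI)
    fix x
    have c: "x \<noteq> (x - g) mod (2*m)" using gm g m0 by (intro neqg) (auto simp: XXmem)
    show "x \<in> {x \<in> XX m. (x - g) mod (2*m) \<in> XX m \<and> (rr m x = rr m ((x - g) mod (2*m)) \<and> x \<noteq> (x - g) mod (2*m)) \<and> g mod (2*m) = g}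
       \<longleftrightarrow> x \<in> {x. 0 \<le> x \<and> x < 2*m \<and> x mod m = c}"
      using XXmem2[OF m0, of "x - g"] XXmem[OF m0, of x] c gm core[OF m gm(1), of x] rr_mod[of m "x - g"]
      unfolding c_def by auto
  qed
  moreover have "card {x. 0 \<le> x \<and> x < 2*m \<and> x mod m = c} = 2" unfolding c_def
    using m0 by (intro card_cls) auto
  ultimately show ?thesis using int_count[OF m, of g] by simp
qed

lemma ext_m:
  fixes m :: int assumes m: "m > 3" "odd m"
  shows "ext_mult (2*m) (SS m ` II m) m = 0"
proof -
  have "{x \<in> XX m. (x - m) mod (2*m) \<in> XX m \<and> rr m x \<noteq> rr m ((x - m) mod (2*m)) \<and> m mod (2*m) = m} = {}"
  proof -
    have "rr m ((x - m) mod (2*m)) = rr m x" for x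
    proof -
      have a: "(x - m) mod m = x mod m" by simp
      show ?thesis unfolding rr_mod unfolding rr_def a by simp
    qed
    then show ?thesis by auto
  qed
  then show ?thesis using ext_count[OF m, of m] by (metis card.empty)
qed

lemma ext_g:
  fixes m g :: int assumes m: "m > 3" "odd m" and g: "g \<in> XX m"
  shows "ext_mult (2*m) (SS m ` II m) g = nat (2*m - 6)"
proof -
  have m0: "m > 0" using m by simp
  have gm: "g mod m \<noteq> 0" "g mod (2*m) = g" using g XXmem[OF m0] by auto
  define c where "c = (g * ((m+1) div 2)) mod m"
  define F where "F = {x. 0 \<le> x \<and> x < 2*m \<and> x mod m \<noteq> 0 \<and> (x - g) mod m \<noteq> 0}"
  define T where "T = {x. 0 \<le> x \<and> x < 2*m \<and> x mod m = c}"
  have "{x \<in> XX m. (x - g) mod (2*m) \<in> XX m \<and> rr m x \<noteq> rr m ((x - g) mod (2*m)) \<and> g mod (2*m) = g}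
     = F - T"
  proof (rule set_eqI)
    fix x
    show "x \<in> {x \<in> XX m. (x - g) mod (2*m) \<in> XX m \<and> rr m x \<noteq> rr m ((x - g) mod (2*m)) \<and> g mod (2*m) = g}
       \<longleftrightarrow> x \<in> F - T"
      using XXmem2[OF m0, of "x - g"] XXmem[OF m0, of x] gm core[OF m gm(1), of x] rr_mod[of m "x - g"]
      unfolding c_def F_def T_def by auto
  qed
  moreover have TF: "T \<subseteq> F"
  proof
    fix x assume "x \<in> T"
    then have "0 \<le> x \<and> x < 2*m" "x mod m = c" unfolding T_def by auto
    then show "x \<in> F" using core[OF m gm(1), of x] unfolding F_def c_def by auto
  qed
  moreover have cT: "card T = 2" unfolding T_def c_def using m0 by (intro card_cls) auto
  moreover have cF: "card F = nat (2*m) - 4"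
  proof -
    define g' where "g' = g mod m"
    have "0 \<le> g'" "g' < m" using m0 unfolding g'_def by auto
    then have g': "0 < g'" "g' < m" using gm(1) unfolding g'_def by auto
    have e: "(x - g) mod m \<noteq> 0 \<longleftrightarrow> x mod m \<noteq> g'" for x
      unfolding g'_def by (simp add: mod_eq_dvd_iff dvd_eq_mod_eq_0[symmetric])
    have "F = {0..<2*m} - ({x. 0 \<le> x \<and> x < 2*m \<and> x mod m = 0} \<union> {x. 0 \<le> x \<and> x < 2*m \<and> x mod m = g'})"
    proof (rule set_eqI)
      fix x show "x \<in> F \<longleftrightarrow> x \<in> {0..<2*m} - ({x. 0 \<le> x \<and> x < 2*m \<and> x mod m = 0} \<union> {x. 0 \<le> x \<and> x < 2*m \<and> x mod m = g'})"
        unfolding F_def using e[of x] by auto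
    qed
    also have "\<dots> = {0..<2*m} - ({0, m} \<union> {g', g' + m})"
      using cls[of m 0] cls[of m g'] m0 g' by simp
    also have "card \<dots> = card {0..<2*m} - card ({0, m} \<union> {g', g' + m})"
      using m0 g' by (intro card_Diff_subset) auto
    also have "card ({0, m} \<union> {g', g' + m}) = 4"
    proof -
      have "0 \<noteq> m" "0 \<noteq> g'" "0 \<noteq> g' + m" "m \<noteq> g'" "m \<noteq> g' + m" "g' \<noteq> g' + m"
        using m0 g' by linarith+
      then show ?thesis by simp
    qed
    finally show ?thesis by simp
  qed
  moreover have fF: "finite F" unfolding F_def by (rule finite_subset[of _ "{0..<2*m}"]) auto
  ultimately have "card {x \<in> XX m. (x - g) mod (2*m) \<in> XX m \<and> rr m x \<noteq> rr m ((x - g) mod (2*m)) \<and> g mod (2*m) = g}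
      = nat (2*m) - 4 - 2"
    using card_Diff_subset[OF finite_subset[OF TF fF] TF] by simp
  then show ?thesis using ext_count[OF m, of g] m by simp
qed

lemma pdisj: fixes m :: int assumes m: "m > 3" "odd m"
  shows "pairwise disjnt (SS m ` II m)"
proof (rule pairwiseI)
  fix A B assume A: "A \<in> SS m ` II m" and B: "B \<in> SS m ` II m" and AB: "A \<noteq> B"
  obtain i where i: "i \<in> II m" "A = SS m i" using A by auto
  obtain j where j: "j \<in> II m" "B = SS m j" using B by auto
  show "disjnt A B" unfolding disjnt_def
  proof (rule ccontr)
    assume "A \<inter> B \<noteq> {}"
    then obtain x where "x \<in> SS m i" "x \<in> SS m j" using i j by auto
    then have "i = j" using inS[OF m i(1), of x] inS[OF m j(1), of x] by simp
    then show False using AB i j by simp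
  qed
qed

lemma unionS: fixes m :: int assumes m: "m > 3" "odd m"
  shows "\<Union>(SS m ` II m) = XX m"
proof
  show "\<Union>(SS m ` II m) \<subseteq> XX m" using inS[OF m] by blast
  show "XX m \<subseteq> \<Union>(SS m ` II m)" using coverX[OF m] by blast
qed

lemma pfam: fixes m :: int assumes m: "m > 3" "odd m"
  shows "pdf_family (2*m) (nat ((m - 1) div 2)) 4 (SS m ` II m)"
  unfolding pdf_family_def
proof (intro conjI ballI)
  show "finite (SS m ` II m)" using finII by simp
  show "card (SS m ` II m) = nat ((m - 1) div 2)"
    using card_image[OF injS[OF m]] unfolding II_def by simp
  show "pairwise disjnt (SS m ` II m)" by (rule pdisj[OF m])
  fix D assume D: "D \<in> SS m ` II m"
  then obtain i where i: "i \<in> II m" "D = SS m i" by auto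
  show "D \<subseteq> {1..<2*m}"
  proof
    fix x assume "x \<in> D"
    then have "x \<in> XX m" using inS[OF m i(1)] i by auto
    then show "x \<in> {1..<2*m}" unfolding XX_def by auto
  qed
  have "1 \<le> i" "2*i < m" using i m unfolding II_def by auto
  then have "i \<noteq> m - i" "i \<noteq> m + i" "i \<noteq> 2*m - i" "m - i \<noteq> m + i" "m - i \<noteq> 2*m - i" "m + i \<noteq> 2*m - i"
    by linarith+
  then show "card D = 4" unfolding i SS_def by simp
qed

theorem mainTheorem4:
  fixes m :: int
  assumes "m > 3" and "odd m"
  defines "S \<equiv> (\<lambda>i::int. {i, m - i, m + i, 2 * m - i})"
  shows "partitions ({0..<2 * m} - {0, m}) (S ` {1..(m - 1) div 2})
    \<and> is_DPDF (2 * m) (nat ((m - 1) div 2)) 4 2 (nat (2 * m - 2)) (S ` {1..(m - 1) div 2})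
    \<and> is_EPDF (2 * m) (nat ((m - 1) div 2)) 4 (nat (2 * m - 6)) 0 (S ` {1..(m - 1) div 2})"
proof -
  note m = assms(1,2)
  have e: "S ` {1..(m - 1) div 2} = SS m ` II m" unfolding S_def SS_def II_def by simp
  have X: "{0..<2 * m} - {0, m} = XX m" unfolding XX_def by simp
  have rest: "{0..<2*m} - (XX m \<union> {0}) = {m}"
    unfolding XX_def using m by auto
  show ?thesis unfolding e X
    unfolding partitions_def is_DPDF_def is_EPDF_def unionS[OF m] rest
    using pdisj[OF m] pfam[OF m] int_g[OF m] int_m[OF m] ext_g[OF m] ext_m[OF m] by simp
qed

end
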